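(* Let $\mathring{\mathcal{M}}$ denote the linear space of real symmetric trace-free $2\times2$ matrices, and let $$\Lambda = \Big\{\tfrac15(3e_1\pm 4e_2),\ \tfrac15(4e_1\pm 3e_2),\ \tfrac15(-3e_1\mp 4e_2),\ \tfrac15(-4e_1\mp 3e_2)\Big\}\subset\mathbb{S}^1.$$ There exists a family of positive smooth functions $\{\gamma_k\in C^\infty(\mathring{\mathcal{M}}) : k\in\Lambda\}$ such that for every $\mathring{R}\in\mathring{\mathcal{M}}$: $$\gamma_{-k}(\mathring{R}) = \gamma_k(\mathring{R}),\qquad \mathring{R} = \sum_{k\in\Lambda}(\gamma_k(\mathring{R}))^2\,(k\mathring{\otimes} k),\qquad \gamma_k(\mathring{R}) \le C(1+|\mathring{R}|)^{1/2}$$ for all $k\in\Lambda$, where $C$ is an absolute constant.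
   Context: For $f,g\in\mathbb{R}^2$, $f\mathring{\otimes} g$ denotes the trace-free part of the tensor product: $f\mathring{\otimes} g = \begin{pmatrix}\frac12 f_1g_1-\frac12 f_2g_2 & f_1g_2\\ f_2g_1 & \frac12 f_2g_2-\frac12 f_1g_1\end{pmatrix}$. $e_1,e_2$ are the standard basis vectors of $\mathbb{R}^2$. *)

theory Defs
  imports "HOL-Analysis.Analysis"
begin

text \<open>Trace-free part of the tensor product of two vectors in R^2 (as in the paper).\<close>
definition tf_tensor :: "real^2 \<Rightarrow> real^2 \<Rightarrow> real^2^2" where
  "tf_tensor f g = (\<chi> i j.
     if i = 1 \<and> j = 1 then (f$1*g$1 - f$2*g$2)/2
     else if i = 1 \<and> j = 2 then f$1*g$2
     else if i = 2 \<and> j = 1 then f$2*g$1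
     else (f$2*g$2 - f$1*g$1)/2)"

definition Msymtf :: "(real^2^2) set" where
  "Msymtf = {R. transpose R = R \<and> trace R = 0}"

definition vec2 :: "real \<Rightarrow> real \<Rightarrow> real^2" where
  "vec2 a b = (\<chi> i. if i = 1 then a else b)"

definition Lambda :: "(real^2) set" where
  "Lambda = {vec2 (3/5) (4/5), vec2 (3/5) (-4/5), vec2 (4/5) (3/5), vec2 (4/5) (-3/5),
             vec2 (-3/5) (-4/5), vec2 (-3/5) (4/5), vec2 (-4/5) (-3/5), vec2 (-4/5) (3/5)}"

fun ddir :: "('a::real_normed_vector \<Rightarrow> real) \<Rightarrow> 'a list \<Rightarrow> 'a \<Rightarrow> real" where
  "ddir f [] = f"
| "ddir f (v # vs) = (\<lambda>x. deriv (\<lambda>t. ddir f vs (x + t *\<^sub>R v)) 0)"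

text \<open>C-infinity on a linear subspace S: all iterated directional derivatives along
  directions in S exist on S and are continuous on S.\<close>
definition smooth_on_subspace :: "'a::real_normed_vector set \<Rightarrow> ('a \<Rightarrow> real) \<Rightarrow> bool" where
  "smooth_on_subspace S f \<longleftrightarrow>
     (\<forall>vs. set vs \<subseteq> S \<longrightarrow>
        continuous_on S (ddir f vs) \<and>
        (\<forall>v\<in>S. \<forall>x\<in>S. (\<lambda>t. ddir f vs (x + t *\<^sub>R v)) differentiable (at 0)))"

end

theory Submission
  imports Defs
begin

inductive cl :: "('a::real_normed_vector \<Rightarrow> real) \<Rightarrow> bool" where
  cl_const: "cl (\<lambda>x. c)"
| cl_lin: "bounded_linear L \<Longrightarrow> cl L"
| cl_add: "cl f \<Longrightarrow> cl g \<Longrightarrow> cl (\<lambda>x. f x + g x)"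
| cl_mult: "cl f \<Longrightarrow> cl g \<Longrightarrow> cl (\<lambda>x. f x * g x)"
| cl_powr: "cl f \<Longrightarrow> (\<forall>x. 0 < f x) \<Longrightarrow> cl (\<lambda>x. c * f x powr r)"

lemma powr_deriv_aux:
  fixes f :: "'a::real_normed_vector \<Rightarrow> real"
  assumes "(f has_derivative f') (at x)" "0 < f x"
  shows "((\<lambda>x. c * f x powr r) has_derivative (\<lambda>h. c * r * f x powr (r - 1) * f' h)) (at x)"
proof -
  have "((\<lambda>x. c * f x powr r) has_derivative
     (\<lambda>h. c * ((f x powr r) * (0 * ln (f x) + f' h * r / f x)))) (at x)"
    using has_derivative_powr[OF assms(1) has_derivative_const[of r] assms(2)]
    by (intro has_derivative_mult_right) auto
  moreover have "\<And>h. c * ((f x powr r) * (0 * ln (f x) + f' h * r / f x)) = c * r * f x powr (r - 1) * f' h"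
    using assms(2) by (simp add: powr_diff field_simps)
  ultimately show ?thesis by simp
qed

lemma cl_deriv:
  assumes "cl f"
  shows "\<exists>f'. (\<forall>x. (f has_derivative f' x) (at x)) \<and> (\<forall>v. cl (\<lambda>x. f' x v))"
  using assms
proof (induction rule: cl.induct)
  case (cl_const c)
  show ?case by (rule exI[of _ "\<lambda>x h. 0"]) (auto intro: cl.cl_const)
next
  case (cl_lin L)
  show ?case
    by (rule exI[of _ "\<lambda>x. L"]) (auto intro: cl.cl_const bounded_linear_imp_has_derivative cl_lin)
next
  case (cl_add f g)
  then obtain f' g' where f: "\<forall>x. (f has_derivative f' x) (at x)" "\<forall>v. cl (\<lambda>x. f' x v)"
    and g: "\<forall>x. (g has_derivative g' x) (at x)" "\<forall>v. cl (\<lambda>x. g' x v)" by blast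
  show ?case
    by (rule exI[of _ "\<lambda>x h. f' x h + g' x h"]) (use f g in \<open>auto intro: has_derivative_add cl.cl_add\<close>)
next
  case (cl_mult f g)
  then obtain f' g' where f: "\<forall>x. (f has_derivative f' x) (at x)" "\<forall>v. cl (\<lambda>x. f' x v)"
    and g: "\<forall>x. (g has_derivative g' x) (at x)" "\<forall>v. cl (\<lambda>x. g' x v)" by blast
  show ?case
    by (rule exI[of _ "\<lambda>x h. f x * g' x h + f' x h * g x"])
      (use f g cl_mult.hyps in \<open>auto intro: has_derivative_mult
         cl.cl_add[OF cl.cl_mult[OF cl_mult.hyps(1) g(2)[rule_format]] cl.cl_mult[OF f(2)[rule_format] cl_mult.hyps(2)]]\<close>)
next
  case (cl_powr f c r)
  then obtain f' where f: "\<forall>x. (f has_derivative f' x) (at x)" "\<forall>v. cl (\<lambda>x. f' x v)" by blast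
  have "cl (\<lambda>x. (c * r) * f x powr (r - 1))" using cl_powr.hyps by (intro cl.cl_powr) auto
  then have "\<forall>v. cl (\<lambda>x. c * r * f x powr (r - 1) * f' x v)"
    using f(2) by (auto intro: cl.cl_mult)
  then show ?case
    using f(1) cl_powr.hyps(2)
    by (intro exI[of _ "\<lambda>x h. c * r * f x powr (r - 1) * f' x h"]) (auto intro: powr_deriv_aux)
qed

lemma cl_line:
  assumes "cl f"
  shows "\<exists>f'. cl f' \<and> (\<forall>x. ((\<lambda>t. f (x + t *\<^sub>R v)) has_derivative (\<lambda>t. t * f' x)) (at 0))"
proof -
  obtain g where g: "\<forall>x. (f has_derivative g x) (at x)" "\<forall>v. cl (\<lambda>x. g x v)"
    using cl_deriv[OF assms] by blast
  have "((\<lambda>t. f (x + t *\<^sub>R v)) has_derivative (\<lambda>t. t * g x v)) (at 0)" for x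
  proof -
    have l: "((\<lambda>t::real. x + t *\<^sub>R v) has_derivative (\<lambda>t. t *\<^sub>R v)) (at 0)"
      by (auto intro!: derivative_eq_intros)
    have "((\<lambda>t. f (x + t *\<^sub>R v)) has_derivative (\<lambda>t. g x (t *\<^sub>R v))) (at 0)"
      using has_derivative_compose[OF l, of f "g x"] g(1) by (simp add: o_def)
    moreover have "linear (g x)" using g(1) has_derivative_linear by blast
    ultimately show ?thesis by (simp add: linear_scale)
  qed
  then show ?thesis using g(2) by blast
qed

lemma cl_ddir: "cl f \<Longrightarrow> cl (ddir f vs)"
proof (induction vs)
  case Nil then show ?case by simp
next
  case (Cons v vs)
  then obtain f' where f': "cl f'" "\<forall>x. ((\<lambda>t. ddir f vs (x + t *\<^sub>R v)) has_derivative (\<lambda>t. t * f' x)) (at 0)"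
    using cl_line by blast
  have "ddir f (v # vs) = f'"
  proof
    fix x
    have "((\<lambda>t. ddir f vs (x + t *\<^sub>R v)) has_field_derivative f' x) (at 0)"
    proof -
      have "(\<lambda>t. t * f' x) = (*) (f' x)" by (auto simp: mult.commute)
      moreover have "((\<lambda>t. ddir f vs (x + t *\<^sub>R v)) has_derivative (\<lambda>t. t * f' x)) (at 0)"
        using f'(2) by blast
      ultimately show ?thesis unfolding has_field_derivative_def by metis
    qed
    then show "ddir f (v # vs) x = f' x" by (simp add: DERIV_imp_deriv)
  qed
  then show ?case using f' by simp
qed

lemma cl_smooth:
  assumes "cl f" shows "smooth_on_subspace S f"
  unfolding smooth_on_subspace_def
proof (intro allI impI conjI ballI)
  fix vs :: "'a list"
  have c: "cl (ddir f vs)" using cl_ddir assms by blast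
  then obtain g where g: "\<forall>x. (ddir f vs has_derivative g x) (at x)" using cl_deriv by blast
  show "continuous_on S (ddir f vs)"
    using g has_derivative_continuous by (blast intro: continuous_at_imp_continuous_on)
  fix v x
  show "(\<lambda>t. ddir f vs (x + t *\<^sub>R v)) differentiable (at 0)"
    using cl_line[OF c, of v] unfolding differentiable_def by blast
qed

definition alp :: "real^2^2 \<Rightarrow> real" where "alp R = 25/7 * R$1$1"
definition bet :: "real^2^2 \<Rightarrow> real" where "bet R = 25/24 * R$1$2"
definition NN :: "real^2^2 \<Rightarrow> real" where "NN R = 1 * (1 + alp R * alp R + bet R * bet R) powr (1/2)"
definition uu :: "real^2 \<Rightarrow> real^2^2 \<Rightarrow> real" where
  "uu k R = NN R + ((k$1*k$1 - k$2*k$2)*(25/28)) * alp R + (k$1*k$2*(25/48)) * bet R"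
definition gam :: "real^2 \<Rightarrow> real^2^2 \<Rightarrow> real" where
  "gam k R = 1 * (uu k R) powr (1/2)"

lemma cl_alp: "cl alp"
proof -
  have "bounded_linear (\<lambda>R::real^2^2. 25/7 * R$1$1)"
    by (intro bounded_linear_const_mult bounded_linear_compose[OF bounded_linear_vec_nth[of 1]] bounded_linear_vec_nth)
  then show ?thesis unfolding alp_def[abs_def] by (rule cl_lin)
qed

lemma cl_bet: "cl bet"
proof -
  have "bounded_linear (\<lambda>R::real^2^2. 25/24 * R$1$2)"
    by (intro bounded_linear_const_mult bounded_linear_compose[OF bounded_linear_vec_nth[of 2]] bounded_linear_vec_nth)
  then show ?thesis unfolding bet_def[abs_def] by (rule cl_lin)
qed

lemma NN_sqrt: "NN R = sqrt (1 + alp R * alp R + bet R * bet R)"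
  unfolding NN_def by (simp add: powr_half_sqrt add_nonneg_nonneg)

lemma NN_ge: "\<bar>alp R\<bar> \<le> NN R" "\<bar>bet R\<bar> \<le> NN R" "1 \<le> NN R"
  unfolding NN_sqrt by (auto intro!: real_le_rsqrt simp: power2_eq_square)

lemma NN_le: "NN R \<le> 1 + \<bar>alp R\<bar> + \<bar>bet R\<bar>"
proof -
  have e: "\<bar>alp R\<bar> * \<bar>alp R\<bar> = alp R * alp R" "\<bar>bet R\<bar> * \<bar>bet R\<bar> = bet R * bet R"
    by (simp_all add: abs_mult_self_eq)
  have "1 + alp R * alp R + bet R * bet R \<le> (1 + \<bar>alp R\<bar> + \<bar>bet R\<bar>)^2"
    unfolding power2_eq_square e[symmetric] by (simp add: algebra_simps)
  then have "NN R \<le> sqrt ((1 + \<bar>alp R\<bar> + \<bar>bet R\<bar>)^2)"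
    unfolding NN_sqrt by (rule real_sqrt_le_mono)
  also have "\<dots> = 1 + \<bar>alp R\<bar> + \<bar>bet R\<bar>" by simp
  finally show ?thesis .
qed

lemma cl_NN: "cl NN"
proof -
  have "cl (\<lambda>R. 1 + alp R * alp R + bet R * bet R)"
    by (intro cl.cl_add cl.cl_mult cl_alp cl_bet cl.cl_const)
  moreover have "\<forall>R. 0 < 1 + alp R * alp R + bet R * bet R"
    by (simp add: add_pos_nonneg)
  ultimately show ?thesis unfolding NN_def[abs_def] by (rule cl.cl_powr)
qed

lemma cl_uu: "cl (uu k)"
  unfolding uu_def[abs_def]
  by (intro cl.cl_add cl.cl_mult cl_alp cl_bet cl.cl_const cl_NN)

lemma Lambda_coef: "k \<in> Lambda \<Longrightarrow> \<bar>(k$1*k$1 - k$2*k$2)*(25/28)\<bar> = 1/4 \<and> \<bar>k$1*k$2*(25/48)\<bar> = 1/4"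
  unfolding Lambda_def by (auto simp: vec2_def)

lemma uu_bounds:
  assumes "\<bar>p\<bar> = 1/4" "\<bar>q\<bar> = 1/4"
  shows "NN R / 2 \<le> NN R + p * alp R + q * bet R" "NN R + p * alp R + q * bet R \<le> 3/2 * NN R"
proof -
  have a: "\<bar>p * alp R\<bar> \<le> NN R / 4" using NN_ge(1)[of R] unfolding abs_mult assms(1) by simp
  have b: "\<bar>q * bet R\<bar> \<le> NN R / 4" using NN_ge(2)[of R] unfolding abs_mult assms(2) by simp
  show "NN R / 2 \<le> NN R + p * alp R + q * bet R" "NN R + p * alp R + q * bet R \<le> 3/2 * NN R"
    using a b by (auto simp: abs_le_iff)
qed

lemma uu_pos: "k \<in> Lambda \<Longrightarrow> 0 < uu k R"
  using uu_bounds(1)[of "(k$1*k$1 - k$2*k$2)*(25/28)" "k$1*k$2*(25/48)" R] Lambda_coef[of k] NN_ge(3)[of R]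
  unfolding uu_def by linarith

lemma uu_le: "k \<in> Lambda \<Longrightarrow> uu k R \<le> 9 * (1 + norm R)"
proof -
  assume k: "k \<in> Lambda"
  have "uu k R \<le> 3/2 * NN R"
    using uu_bounds(2)[of "(k$1*k$1 - k$2*k$2)*(25/28)" "k$1*k$2*(25/48)" R] Lambda_coef[OF k]
    unfolding uu_def by linarith
  moreover have "\<bar>R$1$1\<bar> \<le> norm R" "\<bar>R$1$2\<bar> \<le> norm R"
    using component_le_norm_cart[of "R$1" 1] component_le_norm_cart[of "R$1" 2] Finite_Cartesian_Product.norm_nth_le[of R 1]
    by linarith+
  moreover note NN_le[of R]
  ultimately show ?thesis unfolding alp_def bet_def by (auto simp: abs_mult)
qed

lemma vec2_nth[simp]: "vec2 a b $ 1 = a" "vec2 a b $ 2 = b"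
  by (auto simp: vec2_def)

lemma vec2_eq[simp]: "vec2 a b = vec2 c d \<longleftrightarrow> a = c \<and> b = d"
  by (auto simp: vec_eq_iff forall_2)

lemma sq9: "sqrt (9::real) = 3" using real_sqrt_abs[of 3] by simp
lemma sqx: "sqrt (9 * (1 + norm (R::real^2^2))) = 3 * (1 + norm R) powr (1/2)"
proof -
    have n: "0 \<le> 1 + norm R" by (simp add: add_nonneg_nonneg)
    have "sqrt (9 * (1 + norm R)) = sqrt 9 * sqrt (1 + norm R)" by (rule real_sqrt_mult)
    also have "sqrt (1 + norm R) = (1 + norm R) powr (1/2)" using powr_half_sqrt[OF n] by simp
    finally show ?thesis unfolding sq9 .
qed

lemma sum_Lambda: "sum F Lambda = F (vec2 (3/5) (4/5)) + F (vec2 (3/5) (-4/5)) + F (vec2 (4/5) (3/5)) + F (vec2 (4/5) (-3/5))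
   + F (vec2 (-3/5) (-4/5)) + F (vec2 (-3/5) (4/5)) + F (vec2 (-4/5) (-3/5)) + F (vec2 (-4/5) (3/5))"
  unfolding Lambda_def by (simp add: algebra_simps)

lemma tf11: "tf_tensor k k $ 1 $ 1 = (k$1*k$1 - k$2*k$2)/2" by (simp add: tf_tensor_def)
lemma tf12: "tf_tensor k k $ 1 $ 2 = k$1*k$2" by (simp add: tf_tensor_def)
lemma tf21: "tf_tensor k k $ 2 $ 1 = k$1*k$2" by (simp add: tf_tensor_def mult.commute)
lemma tf22: "tf_tensor k k $ 2 $ 2 = -(k$1*k$1 - k$2*k$2)/2" by (simp add: tf_tensor_def)

lemma ent:
  fixes N A B :: real
  shows "(\<Sum>k\<in>Lambda. (N + ((k$1*k$1 - k$2*k$2)*(25/28)) * A + (k$1*k$2*(25/48)) * B) * ((k$1*k$1 - k$2*k$2)/2)) = 7/25 * A"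
        "(\<Sum>k\<in>Lambda. (N + ((k$1*k$1 - k$2*k$2)*(25/28)) * A + (k$1*k$2*(25/48)) * B) * (k$1*k$2)) = 24/25 * B"
        "(\<Sum>k\<in>Lambda. (N + ((k$1*k$1 - k$2*k$2)*(25/28)) * A + (k$1*k$2*(25/48)) * B) * (-(k$1*k$1 - k$2*k$2)/2)) = - (7/25 * A)"
  unfolding sum_Lambda by (simp_all add: algebra_simps)

theorem lemma4p1:
  shows "\<exists>(\<gamma> :: real^2 \<Rightarrow> real^2^2 \<Rightarrow> real) (C :: real).
    (\<forall>k\<in>Lambda. smooth_on_subspace Msymtf (\<gamma> k) \<and> (\<forall>R\<in>Msymtf. \<gamma> k R > 0)) \<and>
    (\<forall>k\<in>Lambda. \<forall>R\<in>Msymtf. \<gamma> (-k) R = \<gamma> k R) \<and>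
    (\<forall>R\<in>Msymtf. R = (\<Sum>k\<in>Lambda. (\<gamma> k R)\<^sup>2 *\<^sub>R tf_tensor k k)) \<and>
    (\<forall>k\<in>Lambda. \<forall>R\<in>Msymtf. \<gamma> k R \<le> C * (1 + norm R) powr (1/2))"
proof (intro exI[of _ gam] exI[of _ 3] conjI ballI)
  fix k assume k: "k \<in> Lambda"
  show "smooth_on_subspace Msymtf (gam k)"
    unfolding gam_def[abs_def] by (intro cl_smooth cl.cl_powr cl_uu allI uu_pos k)
  fix R :: "real^2^2"
  show "0 < gam k R" using uu_pos[OF k, of R] by (simp add: gam_def)
  show "gam (-k) R = gam k R" by (simp add: gam_def uu_def)
  have "gam k R = sqrt (uu k R)" using powr_half_sqrt[OF less_imp_le[OF uu_pos[OF k, of R]]] by (simp add: gam_def)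
  also have "\<dots> \<le> sqrt (9 * (1 + norm R))" using uu_le[OF k] by simp
  also have "\<dots> = 3 * (1 + norm R) powr (1/2)" by (rule sqx)
  finally show "gam k R \<le> 3 * (1 + norm R) powr (1/2)" .
next
  fix R :: "real^2^2" assume R: "R \<in> Msymtf"
  have tR: "transpose R = R" and trR: "trace R = 0" using R unfolding Msymtf_def by auto
  have "(transpose R) $ 1 $ 2 = R $ 2 $ 1" by (simp add: transpose_def)
  then have s1: "R$2$1 = R$1$2" using tR by simp
  have "trace R = R$1$1 + R$2$2" unfolding trace_def by (simp add: sum_2)
  then have s2: "R$2$2 = - R$1$1" using trR by simp
  note s = s1 s2
  have "(\<Sum>k\<in>Lambda. (gam k R)\<^sup>2 *\<^sub>R tf_tensor k k) = (\<Sum>k\<in>Lambda. uu k R *\<^sub>R tf_tensor k k)"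
    by (rule sum.cong) (auto simp: gam_def uu_pos powr_half_sqrt less_imp_le)
  also have "\<dots> = R"
  proof -
    have M: "\<And>i j. (\<Sum>k\<in>Lambda. uu k R *\<^sub>R tf_tensor k k) $ i $ j = (\<Sum>k\<in>Lambda. uu k R * (tf_tensor k k $ i $ j))"
      by simp
    have E11: "(\<Sum>k\<in>Lambda. uu k R * (tf_tensor k k $ 1 $ 1)) = R$1$1"
      unfolding tf11 uu_def ent(1) alp_def by simp
    have E12: "(\<Sum>k\<in>Lambda. uu k R * (tf_tensor k k $ 1 $ 2)) = R$1$2"
      unfolding tf12 uu_def ent(2) bet_def by simp
    have E21: "(\<Sum>k\<in>Lambda. uu k R * (tf_tensor k k $ 2 $ 1)) = R$2$1"
      unfolding tf21 uu_def ent(2) bet_def s by simp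
    have E22: "(\<Sum>k\<in>Lambda. uu k R * (tf_tensor k k $ 2 $ 2)) = R$2$2"
      unfolding tf22 uu_def ent(3) alp_def s by simp
    show ?thesis unfolding vec_eq_iff forall_2 M E11 E12 E21 E22 by simp
  qed
  finally show "R = (\<Sum>k\<in>Lambda. (gam k R)\<^sup>2 *\<^sub>R tf_tensor k k)" by simp
qed

end
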